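(* Let $G$ be a finite-horizon two-player zero-sum sequential game and $\mathfrak J$ a regularized minimax objective under which $G$ has an equilibrium (and all best responses exist). Then the PuB-AMG of $G$ under the analog objective $\tilde{\mathfrak J}$ has a well-defined value, i.e. $\max_{\tilde\pi_0}\min_{\tilde\pi_1}\tilde{\mathfrak J}(\tilde\pi_0,\tilde\pi_1)=\min_{\tilde\pi_1}\max_{\tilde\pi_0}\tilde{\mathfrak J}(\tilde\pi_0,\tilde\pi_1)$, and this value equals the value $\max_{\pi_0}\min_{\pi_1}\mathfrak J(\pi_0,\pi_1)=\min_{\pi_1}\max_{\pi_0}\mathfrak J(\pi_0,\pi_1)$ of $G$.
   Context: A finite-horizon two-player zero-sum sequential game consists of: players $i\in\{0,1\}$; a finite action set $\mathbb{A}$; a set of histories $\mathbb{H}$, at each of which exactly one player $\iota$ acts; each history $h$ determines each player's action-observation history (AOH) $h_i\in\mathbb H_i$ (perfect recall) and a public history $h_{\text{pub}}$ (sequence of common-knowledge public observations); an initial history distribution $\mu$; a reward $\mathcal{R}:\mathbb{H}\times\mathbb{A}\to\mathbb{R}$ (player 0 gets $\mathcal R$, player 1 gets $-\mathcal R$); a transition function $\mathcal{T}:\mathbb{H}\times\mathbb{A}\to\Delta(\mathbb{H})$; a horizon $T$. $\mathbb{H}(h_{\text{pub}})$, $\mathbb{H}_i(h_{\text{pub}})$ denote histories/AOHs consistent with $h_{\text{pub}}$; $h_\iota$ is the acting player's AOH at $h$. A policy of $i$ is $\pi_i:\mathbb H_i\to\Delta(\mathbb A)$. A regularized minimax objective is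 $\mathfrak{J}(\pi_0,\pi_1)=\mathbb{E}[\sum_{t=0}^{T-1}\mathfrak{R}(H^t,A^t,\pi(H^t_\iota))\mid\pi_0,\pi_1]$ for some $\mathfrak R:\mathbb{H}\times\mathbb{A}\times\Delta(\mathbb A)\to\mathbb{R}$; player 0 maximizes, player 1 minimizes; an equilibrium is a saddle point. The PuB-AMG of $G$: states (PBSs) are $\tilde s\in\Delta(\mathbb{H}(h_{\text{pub}}))$ for public histories $h_{\text{pub}}$, initial state $\mu$; at $\tilde s$ the acting player chooses a public decision rule $\tilde a:\mathbb{H}_\iota(h_{\text{pub}})\to\Delta(\mathbb{A})$; the next PBS arises by sampling $H\sim\tilde s$, $A\sim\tilde a(H_\iota)$, a next history from $\mathcal T(H,A)$, observing its public observation $o$, and taking the posterior over next histories given $\tilde s,\tilde a,o$. The analog objective is $\tilde{\mathfrak J}(\tilde\pi_0,\tilde\pi_1)=\mathbb{E}[\sum_t\tilde{\mathfrak R}(\tilde S^t,\tilde A^t)\mid\tilde\pi_0,\tilde\pi_1]$ with $\tilde{\mathfrak R}(\tilde s,\tilde a)=\mathbb{E}_{H\sim\tilde s}\mathbb{E}_{A\sim\tilde a(H_\iota)}\mathfrak R(H,A,\tilde a(H_\iota))$, where a PuB-AMG policy $\tilde\pi_i$ maps PBSs where $i$ acts to decision rules. *)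

theory Defs
  imports "HOL-Probability.Probability"
begin

datatype player = P0 | P1

text \<open>A history is a trajectory: an initial node followed by the sequence of
  (action taken, resulting node) pairs.  Transitions of the game extend the
  trajectory, so action-observation histories (built from the trajectory) have
  perfect recall by construction.\<close>

type_synonym ('w,'a) hist = "'w \<times> ('a \<times> 'w) list"

record ('w,'a,'o,'q) sgame =
  init    :: "'w pmf"
  trans   :: "('w,'a) hist \<Rightarrow> 'a \<Rightarrow> 'w pmf"
  actor   :: "('w,'a) hist \<Rightarrow> player"
  obs     :: "player \<Rightarrow> ('w,'a) hist \<Rightarrow> 'o"
  pobs    :: "('w,'a) hist \<Rightarrow> 'q"
  reward  :: "('w,'a) hist \<Rightarrow> 'a \<Rightarrow> real"            \<comment> \<open>R (not used by the regularized objective)\<close>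
  horizon :: nat

definition hprefix :: "nat \<Rightarrow> ('w,'a) hist \<Rightarrow> ('w,'a) hist" where
  "hprefix k h = (fst h, take k (snd h))"

definition extend :: "('w,'a) hist \<Rightarrow> 'a \<Rightarrow> 'w \<Rightarrow> ('w,'a) hist" where
  "extend h a w = (fst h, snd h @ [(a, w)])"

type_synonym ('a,'o,'q) aoh = "('a option \<times> 'o \<times> 'q) list"

definition aoh :: "('w,'a,'o,'q) sgame \<Rightarrow> player \<Rightarrow> ('w,'a) hist \<Rightarrow> ('a,'o,'q) aoh" where
  "aoh G i h = map (\<lambda>k. (if k = 0 then None
                          else if actor G (hprefix (k - 1) h) = i then Some (fst (snd h ! (k - 1)))
                          else None,
                         obs G i (hprefix k h), pobs G (hprefix k h)))
                  [0..<Suc (length (snd h))]"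

definition pubhist :: "('w,'a,'o,'q) sgame \<Rightarrow> ('w,'a) hist \<Rightarrow> 'q list" where
  "pubhist G h = map (\<lambda>k. pobs G (hprefix k h)) [0..<Suc (length (snd h))]"

definition Tnext :: "('w,'a,'o,'q) sgame \<Rightarrow> ('w,'a) hist \<Rightarrow> 'a \<Rightarrow> ('w,'a) hist pmf" where
  "Tnext G h a = map_pmf (extend h a) (trans G h a)"

definition mu :: "('w,'a,'o,'q) sgame \<Rightarrow> ('w,'a) hist pmf" where
  "mu G = map_pmf (\<lambda>w. (w, [])) (init G)"

type_synonym ('a,'o,'q) policy = "('a,'o,'q) aoh \<Rightarrow> 'a pmf"

definition act :: "('w,'a,'o,'q) sgame \<Rightarrow> ('a,'o,'q) policy \<Rightarrow> ('a,'o,'q) policy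
                     \<Rightarrow> ('w,'a) hist \<Rightarrow> 'a pmf" where
  "act G p0 p1 h = (if actor G h = P0 then p0 else p1) (aoh G (actor G h) h)"

fun hdist :: "('w,'a,'o,'q) sgame \<Rightarrow> ('a,'o,'q) policy \<Rightarrow> ('a,'o,'q) policy
               \<Rightarrow> nat \<Rightarrow> ('w,'a) hist pmf" where
  "hdist G p0 p1 0 = mu G"
| "hdist G p0 p1 (Suc t) =
     bind_pmf (hdist G p0 p1 t) (\<lambda>h. bind_pmf (act G p0 p1 h) (\<lambda>a. Tnext G h a))"

definition Jobj :: "('w,'a,'o,'q) sgame \<Rightarrow> (('w,'a) hist \<Rightarrow> 'a \<Rightarrow> 'a pmf \<Rightarrow> real)
                     \<Rightarrow> ('a,'o,'q) policy \<Rightarrow> ('a,'o,'q) policy \<Rightarrow> real" where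
  "Jobj G r p0 p1 =
     (\<Sum>t<horizon G. measure_pmf.expectation (hdist G p0 p1 t)
        (\<lambda>h. measure_pmf.expectation (act G p0 p1 h) (\<lambda>a. r h a (act G p0 p1 h))))"

text \<open>PBSs are distributions over histories; a decision rule maps AOHs of the
  acting player to action distributions; a PuB-AMG policy maps PBSs to decision rules.\<close>

type_synonym ('w,'a,'o,'q) pubpolicy = "('w,'a) hist pmf \<Rightarrow> ('a,'o,'q) policy"

definition pbs_actor :: "('w,'a,'o,'q) sgame \<Rightarrow> ('w,'a) hist pmf \<Rightarrow> player" where
  "pbs_actor G s = actor G (SOME h. h \<in> set_pmf s)"

definition pbs_step :: "('w,'a,'o,'q) sgame \<Rightarrow> ('w,'a) hist pmf \<Rightarrow> ('a,'o,'q) policy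
                          \<Rightarrow> ('w,'a) hist pmf pmf" where
  "pbs_step G s d =
     (let joint = bind_pmf s (\<lambda>h. bind_pmf (d (aoh G (pbs_actor G s) h)) (\<lambda>a. Tnext G h a))
      in map_pmf (\<lambda>ob. cond_pmf joint {h'. pobs G h' = ob}) (map_pmf (pobs G) joint))"

definition pbs_choice :: "('w,'a,'o,'q) sgame \<Rightarrow> ('w,'a,'o,'q) pubpolicy \<Rightarrow> ('w,'a,'o,'q) pubpolicy
                            \<Rightarrow> ('w,'a) hist pmf \<Rightarrow> ('a,'o,'q) policy" where
  "pbs_choice G q0 q1 s = (if pbs_actor G s = P0 then q0 s else q1 s)"

fun pbs_dist :: "('w,'a,'o,'q) sgame \<Rightarrow> ('w,'a,'o,'q) pubpolicy \<Rightarrow> ('w,'a,'o,'q) pubpolicy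
                  \<Rightarrow> nat \<Rightarrow> ('w,'a) hist pmf pmf" where
  "pbs_dist G q0 q1 0 = return_pmf (mu G)"
| "pbs_dist G q0 q1 (Suc t) =
     bind_pmf (pbs_dist G q0 q1 t) (\<lambda>s. pbs_step G s (pbs_choice G q0 q1 s))"

definition pbs_reward :: "('w,'a,'o,'q) sgame \<Rightarrow> (('w,'a) hist \<Rightarrow> 'a \<Rightarrow> 'a pmf \<Rightarrow> real)
                          \<Rightarrow> ('w,'a) hist pmf \<Rightarrow> ('a,'o,'q) policy \<Rightarrow> real" where
  "pbs_reward G r s d =
     measure_pmf.expectation s (\<lambda>h.
       measure_pmf.expectation (d (aoh G (pbs_actor G s) h))
         (\<lambda>a. r h a (d (aoh G (pbs_actor G s) h))))"

definition Jpub :: "('w,'a,'o,'q) sgame \<Rightarrow> (('w,'a) hist \<Rightarrow> 'a \<Rightarrow> 'a pmf \<Rightarrow> real)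
                     \<Rightarrow> ('w,'a,'o,'q) pubpolicy \<Rightarrow> ('w,'a,'o,'q) pubpolicy \<Rightarrow> real" where
  "Jpub G r q0 q1 =
     (\<Sum>t<horizon G. measure_pmf.expectation (pbs_dist G q0 q1 t)
        (\<lambda>s. pbs_reward G r s (pbs_choice G q0 q1 s)))"

definition is_saddle :: "('x \<Rightarrow> 'y \<Rightarrow> real) \<Rightarrow> 'x \<Rightarrow> 'y \<Rightarrow> bool" where
  "is_saddle f x y \<longleftrightarrow> (\<forall>x' y'. f x' y \<le> f x y \<and> f x y \<le> f x y')"

text \<open>max_x min_y f = v (outer max attained; inner value as infimum) and
  min_y max_x f = v (outer min attained; inner value as supremum).\<close>

definition maxmin_value :: "('x \<Rightarrow> 'y \<Rightarrow> real) \<Rightarrow> real \<Rightarrow> bool" where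
  "maxmin_value f v \<longleftrightarrow>
     (SUP x. INF y. ereal (f x y)) = ereal v \<and> (\<exists>x. (INF y. ereal (f x y)) = ereal v)"

definition minmax_value :: "('x \<Rightarrow> 'y \<Rightarrow> real) \<Rightarrow> real \<Rightarrow> bool" where
  "minmax_value f v \<longleftrightarrow>
     (INF y. SUP x. ereal (f x y)) = ereal v \<and> (\<exists>y. (SUP x. ereal (f x y)) = ereal v)"

end

theory Submission
  imports Defs
begin

lemma hprefix_extend: "k \<le> length (snd h) \<Longrightarrow> hprefix k (extend h a w) = hprefix k h"
  by (simp add: hprefix_def extend_def)

lemma hprefix_full: "hprefix (Suc (length (snd h))) (extend h a w) = extend h a w"
  by (simp add: hprefix_def extend_def)

lemma pubhist_extend: "pubhist G (extend h a w) = pubhist G h @ [pobs G (extend h a w)]"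
proof -
  have l: "length (snd (extend h a w)) = Suc (length (snd h))" by (simp add: extend_def)
  show ?thesis
    unfolding pubhist_def l
    using hprefix_extend[of _ h a w] hprefix_full[of h a w]
    by (simp del: upt_Suc add: upt_Suc_append)
qed

lemma pubhist_aoh: "pubhist G h = map (\<lambda>x. snd (snd x)) (aoh G i h)"
  by (simp add: pubhist_def aoh_def)

lemma length_aoh: "length (aoh G i h) = Suc (length (snd h))"
  by (simp add: aoh_def)

definition Jt :: "('w,'a,'o,'q) sgame \<Rightarrow> ('w,'a) hist pmf \<Rightarrow> ('a,'o,'q) policy \<Rightarrow> ('w,'a) hist pmf" where
  "Jt G s d = bind_pmf s (\<lambda>h. bind_pmf (d (aoh G (pbs_actor G s) h)) (\<lambda>a. Tnext G h a))"

lemma pbs_step_Jt: "pbs_step G s d = map_pmf (\<lambda>ob. cond_pmf (Jt G s d) {h'. pobs G h' = ob}) (map_pmf (pobs G) (Jt G s d))"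
  by (simp add: pbs_step_def Jt_def Let_def)

lemma Jt_set: "h1 \<in> set_pmf (Jt G s d) \<Longrightarrow> \<exists>h\<in>set_pmf s. \<exists>a w. h1 = extend h a w"
  by (auto simp: Jt_def Tnext_def)

lemma Jt_finite:
  fixes G :: "('w::finite, 'a::finite, 'o, 'q) sgame"
  shows "finite (set_pmf s) \<Longrightarrow> finite (set_pmf (Jt G s d))"
  by (auto simp: Jt_def Tnext_def intro!: finite_UN_I)

lemma step_set:
  assumes "s1 \<in> set_pmf (pbs_step G s d)"
  obtains ob where "s1 = cond_pmf (Jt G s d) {h'. pobs G h' = ob}"
    "set_pmf s1 = set_pmf (Jt G s d) \<inter> {h'. pobs G h' = ob}"
proof -
  from assms obtain h0 where h0: "h0 \<in> set_pmf (Jt G s d)"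
    and s1: "s1 = cond_pmf (Jt G s d) {h'. pobs G h' = pobs G h0}"
    by (auto simp: pbs_step_Jt)
  have ne: "set_pmf (Jt G s d) \<inter> {h'. pobs G h' = pobs G h0} \<noteq> {}" using h0 by auto
  show ?thesis
    using that[OF s1] set_cond_pmf[OF ne] s1 by simp
qed

definition pinv :: "('w,'a,'o,'q) sgame \<Rightarrow> nat \<Rightarrow> ('w,'a) hist pmf pmf \<Rightarrow> bool" where
  "pinv G t D \<longleftrightarrow> finite (set_pmf D) \<and>
     (\<forall>s\<in>set_pmf D. finite (set_pmf s) \<and> (\<forall>h\<in>set_pmf s. length (snd h) = t) \<and>
        (\<forall>h\<in>set_pmf s. \<forall>h'\<in>set_pmf s. pubhist G h = pubhist G h')) \<and>
     (\<forall>s\<in>set_pmf D. \<forall>s'\<in>set_pmf D. \<forall>h\<in>set_pmf s. \<forall>h'\<in>set_pmf s'.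
        pubhist G h = pubhist G h' \<longrightarrow> s = s')"

lemma pinv_all:
  fixes G :: "('w::finite, 'a::finite, 'o, 'q) sgame"
  assumes init_public: "\<forall>h\<in>set_pmf (mu G). \<forall>h'\<in>set_pmf (mu G). pubhist G h = pubhist G h'"
  shows "pinv G t (pbs_dist G q0 q1 t)"
proof (induction t)
  case 0
  have "finite (set_pmf (mu G))" by (simp add: mu_def)
  moreover have "length (snd h) = 0" if "h \<in> set_pmf (mu G)" for h using that by (auto simp: mu_def)
  ultimately show ?case using init_public unfolding pinv_def pbs_dist.simps set_return_pmf
    by (intro conjI) (simp, blast, blast)
next
  case (Suc t)
  define D where "D = pbs_dist G q0 q1 t"
  define F where "F = (\<lambda>s. pbs_step G s (pbs_choice G q0 q1 s))"
  have IH: "pinv G t D" using Suc D_def by simp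
  have finD: "\<And>s. s \<in> set_pmf D \<Longrightarrow> finite (set_pmf s)"
    and lenD: "\<And>s h. s \<in> set_pmf D \<Longrightarrow> h \<in> set_pmf s \<Longrightarrow> length (snd h) = t"
    and pubD: "\<And>s h h'. s \<in> set_pmf D \<Longrightarrow> h \<in> set_pmf s \<Longrightarrow> h' \<in> set_pmf s \<Longrightarrow> pubhist G h = pubhist G h'"
    and crossD: "\<And>s s' h h'. s \<in> set_pmf D \<Longrightarrow> s' \<in> set_pmf D \<Longrightarrow> h \<in> set_pmf s \<Longrightarrow> h' \<in> set_pmf s'
        \<Longrightarrow> pubhist G h = pubhist G h' \<Longrightarrow> s = s'"
    and finDD: "finite (set_pmf D)"
    using IH unfolding pinv_def by blast+
  have DS: "pbs_dist G q0 q1 (Suc t) = bind_pmf D F" by (simp add: D_def F_def)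
  have memD: "\<exists>s\<in>set_pmf D. \<exists>ob. s1 = cond_pmf (Jt G s (pbs_choice G q0 q1 s)) {h'. pobs G h' = ob}
     \<and> set_pmf s1 = set_pmf (Jt G s (pbs_choice G q0 q1 s)) \<inter> {h'. pobs G h' = ob}"
    if "s1 \<in> set_pmf (bind_pmf D F)" for s1
  proof -
    from that obtain s where s: "s \<in> set_pmf D" "s1 \<in> set_pmf (F s)" by auto
    from step_set[OF s(2)[unfolded F_def]] s(1) show ?thesis by blast
  qed
  have fin1: "finite (set_pmf (bind_pmf D F))"
  proof -
    have "finite (set_pmf (F s))" if "s \<in> set_pmf D" for s
    proof -
      have "finite (set_pmf s)" using finD that by blast
      then show ?thesis unfolding F_def pbs_step_Jt by (auto intro!: finite_imageI Jt_finite)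
    qed
    then show ?thesis using finDD by simp
  qed
  have ext: "\<exists>h\<in>set_pmf s. length (snd h1) = Suc t \<and> pubhist G h1 = pubhist G h @ [pobs G h1]"
    if sD: "s \<in> set_pmf D" and h1J: "h1 \<in> set_pmf (Jt G s d)" for s d h1
  proof -
    obtain h a w where "h \<in> set_pmf s" "h1 = extend h a w" using Jt_set[OF h1J] by blast
    moreover have "length (snd h) = t" using lenD sD \<open>h \<in> set_pmf s\<close> by blast
    ultimately show ?thesis using pubhist_extend[of G h a w] by (auto simp: extend_def)
  qed
  have A: "finite (set_pmf s1) \<and> (\<forall>h\<in>set_pmf s1. length (snd h) = Suc t) \<and>
        (\<forall>h\<in>set_pmf s1. \<forall>h'\<in>set_pmf s1. pubhist G h = pubhist G h')"
    if s1D: "s1 \<in> set_pmf (bind_pmf D F)" for s1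
  proof -
    obtain s ob where s: "s \<in> set_pmf D"
      and st: "set_pmf s1 = set_pmf (Jt G s (pbs_choice G q0 q1 s)) \<inter> {h'. pobs G h' = ob}"
      using memD[OF s1D] by blast
    have "finite (set_pmf s)" using finD s by blast
    then have "finite (set_pmf (Jt G s (pbs_choice G q0 q1 s)))" by (rule Jt_finite)
    then have f: "finite (set_pmf s1)" using st by simp
    have PH: "pubhist G h = pubhist G h'" if HH: "h \<in> set_pmf s1" "h' \<in> set_pmf s1" for h h'
    proof -
      obtain g where g: "g \<in> set_pmf s" "pubhist G h = pubhist G g @ [pobs G h]"
        using ext[OF s HH(1)[unfolded st, THEN IntD1]] by blast
      obtain g' where g': "g' \<in> set_pmf s" "pubhist G h' = pubhist G g' @ [pobs G h']"
        using ext[OF s HH(2)[unfolded st, THEN IntD1]] by blast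
      have "pubhist G g = pubhist G g'" using pubD s g g' by blast
      moreover have "pobs G h = ob" "pobs G h' = ob" using HH st by auto
      ultimately show ?thesis using g g' by simp
    qed
    have "length (snd h) = Suc t" if "h \<in> set_pmf s1" for h
      using ext[OF s that[unfolded st, THEN IntD1]] by blast
    then show ?thesis using PH f by blast
  qed
  have B: "s1 = s1'" if T: "s1 \<in> set_pmf (bind_pmf D F)" "s1' \<in> set_pmf (bind_pmf D F)"
    "h \<in> set_pmf s1" "h' \<in> set_pmf s1'" "pubhist G h = pubhist G h'" for s1 s1' h h'
  proof -
    obtain s ob where s: "s \<in> set_pmf D"
      and s1: "s1 = cond_pmf (Jt G s (pbs_choice G q0 q1 s)) {h'. pobs G h' = ob}"
      and st: "set_pmf s1 = set_pmf (Jt G s (pbs_choice G q0 q1 s)) \<inter> {h'. pobs G h' = ob}"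
      using memD[OF T(1)] by blast
    obtain s' ob' where s': "s' \<in> set_pmf D"
      and s1': "s1' = cond_pmf (Jt G s' (pbs_choice G q0 q1 s')) {h'. pobs G h' = ob'}"
      and st': "set_pmf s1' = set_pmf (Jt G s' (pbs_choice G q0 q1 s')) \<inter> {h'. pobs G h' = ob'}"
      using memD[OF T(2)] by blast
    obtain g where g: "g \<in> set_pmf s" "pubhist G h = pubhist G g @ [pobs G h]"
      using ext[OF s T(3)[unfolded st, THEN IntD1]] by blast
    obtain g' where g': "g' \<in> set_pmf s'" "pubhist G h' = pubhist G g' @ [pobs G h']"
      using ext[OF s' T(4)[unfolded st', THEN IntD1]] by blast
    have "pobs G h = pobs G h'" using g g' T(5) by simp
    then have "pubhist G g = pubhist G g'" using g g' T(5) by simp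
    then have "s = s'" using crossD s s' g g' by blast
    moreover have "ob = ob'" using st st' T \<open>pobs G h = pobs G h'\<close> by auto
    ultimately show ?thesis using s1 s1' by simp
  qed
  show ?case unfolding DS pinv_def
  proof (intro conjI)
    show "finite (set_pmf (D \<bind> F))" by (rule fin1)
  next
    show "\<forall>s\<in>set_pmf (D \<bind> F). finite (set_pmf s) \<and> (\<forall>h\<in>set_pmf s. length (snd h) = Suc t) \<and>
       (\<forall>h\<in>set_pmf s. \<forall>h'\<in>set_pmf s. pubhist G h = pubhist G h')" using A by blast
  next
    show "\<forall>s\<in>set_pmf (D \<bind> F). \<forall>s'\<in>set_pmf (D \<bind> F). \<forall>h\<in>set_pmf s. \<forall>h'\<in>set_pmf s'.
        pubhist G h = pubhist G h' \<longrightarrow> s = s'" using B by blast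
  qed
qed


lemma pinv_facts:
  assumes "pinv G t D"
  shows "\<And>s. s \<in> set_pmf D \<Longrightarrow> finite (set_pmf s)"
    and "\<And>s h. s \<in> set_pmf D \<Longrightarrow> h \<in> set_pmf s \<Longrightarrow> length (snd h) = t"
    and "\<And>s h h'. s \<in> set_pmf D \<Longrightarrow> h \<in> set_pmf s \<Longrightarrow> h' \<in> set_pmf s \<Longrightarrow> pubhist G h = pubhist G h'"
    and "\<And>s s' h h'. s \<in> set_pmf D \<Longrightarrow> s' \<in> set_pmf D \<Longrightarrow> h \<in> set_pmf s \<Longrightarrow> h' \<in> set_pmf s'
        \<Longrightarrow> pubhist G h = pubhist G h' \<Longrightarrow> s = s'"
    and "finite (set_pmf D)"
  using assms unfolding pinv_def by blast+

definition Ssel :: "('w,'a,'o,'q) sgame \<Rightarrow> ('w,'a,'o,'q) pubpolicy \<Rightarrow> ('w,'a,'o,'q) pubpolicy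
   \<Rightarrow> ('a,'o,'q) aoh \<Rightarrow> ('w,'a) hist pmf" where
  "Ssel G q0 q1 x = (SOME s. s \<in> set_pmf (pbs_dist G q0 q1 (length x - 1)) \<and>
      (\<exists>h\<in>set_pmf s. pubhist G h = map (\<lambda>y. snd (snd y)) x))"

definition dpol :: "('w,'a,'o,'q) sgame \<Rightarrow> ('w,'a,'o,'q) pubpolicy \<Rightarrow> ('w,'a,'o,'q) pubpolicy
   \<Rightarrow> ('w,'a,'o,'q) pubpolicy \<Rightarrow> ('a,'o,'q) policy" where
  "dpol G q0 q1 q x = q (Ssel G q0 q1 x) x"

lemma key:
  fixes G :: "('w::finite, 'a::finite, 'o, 'q) sgame"
  assumes actor_public: "\<forall>h h'. pubhist G h = pubhist G h' \<longrightarrow> actor G h = actor G h'"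
    and init_public: "\<forall>h\<in>set_pmf (mu G). \<forall>h'\<in>set_pmf (mu G). pubhist G h = pubhist G h'"
    and sD: "s \<in> set_pmf (pbs_dist G q0 q1 t)" and hs: "h \<in> set_pmf s"
  shows "pbs_actor G s = actor G h"
    and "act G (dpol G q0 q1 q0) (dpol G q0 q1 q1) h = pbs_choice G q0 q1 s (aoh G (pbs_actor G s) h)"
proof -
  note P = pinv_facts[OF pinv_all[OF init_public, of t q0 q1]]
  have ex: "\<exists>h'. h' \<in> set_pmf s" using hs by blast
  have "(SOME h'. h' \<in> set_pmf s) \<in> set_pmf s" using someI_ex[OF ex] .
  then have "pubhist G (SOME h'. h' \<in> set_pmf s) = pubhist G h" using P(3)[OF sD _ hs] by blast
  then show PA: "pbs_actor G s = actor G h" unfolding pbs_actor_def using actor_public by blast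
  define x where "x = aoh G (actor G h) h"
  have lx: "length x - 1 = t" using P(2)[OF sD hs] by (simp add: x_def length_aoh)
  have px: "pubhist G h = map (\<lambda>y. snd (snd y)) x" unfolding x_def by (rule pubhist_aoh)
  have "Ssel G q0 q1 x = s"
    unfolding Ssel_def lx
  proof (rule someI2[where a = s])
    show "s \<in> set_pmf (pbs_dist G q0 q1 t) \<and> (\<exists>h\<in>set_pmf s. pubhist G h = map (\<lambda>y. snd (snd y)) x)"
      using sD hs px by blast
  next
    fix s' assume "s' \<in> set_pmf (pbs_dist G q0 q1 t) \<and> (\<exists>h\<in>set_pmf s'. pubhist G h = map (\<lambda>y. snd (snd y)) x)"
    then obtain h' where "s' \<in> set_pmf (pbs_dist G q0 q1 t)" "h' \<in> set_pmf s'" "pubhist G h' = pubhist G h"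
      using px by auto
    then show "s' = s" using P(4)[OF _ sD _ hs] by blast
  qed
  then show "act G (dpol G q0 q1 q0) (dpol G q0 q1 q1) h = pbs_choice G q0 q1 s (aoh G (pbs_actor G s) h)"
    unfolding act_def pbs_choice_def PA dpol_def x_def[symmetric] by simp
qed

lemma bind_cond_total:
  "bind_pmf (map_pmf (\<lambda>ob. cond_pmf J {h. f h = ob}) (map_pmf f J)) id = J"
proof -
  have "bind_pmf (map_pmf (\<lambda>ob. cond_pmf J {h. f h = ob}) (map_pmf f J)) id
      = bind_pmf (map_pmf f J) (\<lambda>ob. cond_pmf J {h. f h = ob})"
    by (simp add: bind_map_pmf)
  also have "\<dots> = J"
    by (rule bind_cond_pmf_cancel) (auto simp: vimage_def intro!: arg_cong2[where f=measure])
  finally show ?thesis .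
qed

lemma exp_bind:
  fixes h :: "'b \<Rightarrow> real"
  assumes "finite (set_pmf p)" "\<And>x. x \<in> set_pmf p \<Longrightarrow> finite (set_pmf (f x))"
  shows "measure_pmf.expectation (bind_pmf p f) h = measure_pmf.expectation p (\<lambda>x. measure_pmf.expectation (f x) h)"
proof -
  have "measure_pmf.expectation (bind_pmf p f) h = (\<Sum>a\<in>set_pmf p. pmf p a *\<^sub>R measure_pmf.expectation (f a) h)"
    using assms by (intro pmf_expectation_bind) auto
  also have "\<dots> = measure_pmf.expectation p (\<lambda>x. measure_pmf.expectation (f x) h)"
    using assms by (subst integral_measure_pmf_real[where A="set_pmf p"]) (auto simp: mult.commute)
  finally show ?thesis .
qed

lemma exp_cong:
  fixes f g :: "'b \<Rightarrow> real"
  assumes "\<And>x. x \<in> set_pmf p \<Longrightarrow> f x = g x"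
  shows "measure_pmf.expectation p f = measure_pmf.expectation p g"
  using assms by (intro integral_cong_AE) (auto simp: AE_measure_pmf_iff)


lemma hdist_eq:
  fixes G :: "('w::finite, 'a::finite, 'o, 'q) sgame"
  assumes actor_public: "\<forall>h h'. pubhist G h = pubhist G h' \<longrightarrow> actor G h = actor G h'"
    and init_public: "\<forall>h\<in>set_pmf (mu G). \<forall>h'\<in>set_pmf (mu G). pubhist G h = pubhist G h'"
  shows "hdist G (dpol G q0 q1 q0) (dpol G q0 q1 q1) t = bind_pmf (pbs_dist G q0 q1 t) id"
proof (induction t)
  case 0
  then show ?case by (simp add: bind_return_pmf)
next
  case (Suc t)
  define K where "K = (\<lambda>h. bind_pmf (act G (dpol G q0 q1 q0) (dpol G q0 q1 q1) h) (\<lambda>a. Tnext G h a))"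
  have "hdist G (dpol G q0 q1 q0) (dpol G q0 q1 q1) (Suc t) = bind_pmf (bind_pmf (pbs_dist G q0 q1 t) id) K"
    using Suc by (simp add: K_def id_def)
  also have "\<dots> = bind_pmf (pbs_dist G q0 q1 t) (\<lambda>s. bind_pmf s K)"
    by (simp add: bind_assoc_pmf)
  also have "\<dots> = bind_pmf (pbs_dist G q0 q1 t) (\<lambda>s. bind_pmf (pbs_step G s (pbs_choice G q0 q1 s)) id)"
  proof (rule bind_pmf_cong[OF refl])
    fix s assume sD: "s \<in> set_pmf (pbs_dist G q0 q1 t)"
    have "bind_pmf (pbs_step G s (pbs_choice G q0 q1 s)) id = Jt G s (pbs_choice G q0 q1 s)"
      unfolding pbs_step_Jt by (rule bind_cond_total)
    also have "\<dots> = bind_pmf s K"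
      unfolding Jt_def K_def
      by (rule bind_pmf_cong[OF refl]) (simp add: key[OF actor_public init_public sD])
    finally show "bind_pmf s K = bind_pmf (pbs_step G s (pbs_choice G q0 q1 s)) id" by simp
  qed
  also have "\<dots> = bind_pmf (pbs_dist G q0 q1 (Suc t)) id"
    by (simp add: bind_assoc_pmf)
  finally show ?case .
qed

lemma transl:
  fixes G :: "('w::finite, 'a::finite, 'o, 'q) sgame"
  assumes actor_public: "\<forall>h h'. pubhist G h = pubhist G h' \<longrightarrow> actor G h = actor G h'"
    and init_public: "\<forall>h\<in>set_pmf (mu G). \<forall>h'\<in>set_pmf (mu G). pubhist G h = pubhist G h'"
  shows "Jpub G r q0 q1 = Jobj G r (dpol G q0 q1 q0) (dpol G q0 q1 q1)"
  unfolding Jpub_def Jobj_def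
proof (rule sum.cong[OF refl])
  fix t
  define p0 where "p0 = dpol G q0 q1 q0"
  define p1 where "p1 = dpol G q0 q1 q1"
  define g where "g = (\<lambda>h. measure_pmf.expectation (act G p0 p1 h) (\<lambda>a. r h a (act G p0 p1 h)))"
  note P = pinv_facts[OF pinv_all[OF init_public, of t q0 q1]]
  have "measure_pmf.expectation (hdist G p0 p1 t) g
      = measure_pmf.expectation (bind_pmf (pbs_dist G q0 q1 t) id) g"
    unfolding p0_def p1_def by (simp add: hdist_eq[OF actor_public init_public])
  also have "\<dots> = measure_pmf.expectation (pbs_dist G q0 q1 t) (\<lambda>s. measure_pmf.expectation s g)"
    using P(1,5) by (subst exp_bind) auto
  also have "\<dots> = measure_pmf.expectation (pbs_dist G q0 q1 t) (\<lambda>s. pbs_reward G r s (pbs_choice G q0 q1 s))"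
  proof (rule exp_cong)
    fix s assume sD: "s \<in> set_pmf (pbs_dist G q0 q1 t)"
    show "measure_pmf.expectation s g = pbs_reward G r s (pbs_choice G q0 q1 s)"
      unfolding pbs_reward_def
      by (rule exp_cong) (simp add: g_def p0_def p1_def key[OF actor_public init_public sD])
  qed
  finally show "measure_pmf.expectation (pbs_dist G q0 q1 t) (\<lambda>s. pbs_reward G r s (pbs_choice G q0 q1 s))
     = measure_pmf.expectation (hdist G (dpol G q0 q1 q0) (dpol G q0 q1 q1) t)
        (\<lambda>h. measure_pmf.expectation (act G (dpol G q0 q1 q0) (dpol G q0 q1 q1) h)
              (\<lambda>a. r h a (act G (dpol G q0 q1 q0) (dpol G q0 q1 q1) h)))"
    by (simp add: g_def p0_def p1_def)
qed

lemma saddle_values: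
  assumes "is_saddle f x y"
  shows "maxmin_value f (f x y) \<and> minmax_value f (f x y)"
proof -
  have S1: "f x' y \<le> f x y" and S2: "f x y \<le> f x y'" for x' y'
    using assms unfolding is_saddle_def by blast+
  have I: "(INF y'. ereal (f x y')) = ereal (f x y)"
    by (rule antisym) (auto intro: INF_lower2[where i=y] INF_greatest simp: S2)
  have Sx: "(SUP x'. ereal (f x' y)) = ereal (f x y)"
    by (rule antisym) (auto intro: SUP_upper2[where i=x] SUP_least simp: S1)
  have M1: "(SUP x'. INF y'. ereal (f x' y')) = ereal (f x y)"
  proof (rule antisym)
    show "(SUP x'. INF y'. ereal (f x' y')) \<le> ereal (f x y)"
      by (rule SUP_least) (rule INF_lower2[where i=y], simp, simp add: S1)
    show "ereal (f x y) \<le> (SUP x'. INF y'. ereal (f x' y'))"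
      using I by (metis SUP_upper UNIV_I)
  qed
  have M2: "(INF y'. SUP x'. ereal (f x' y')) = ereal (f x y)"
  proof (rule antisym)
    show "(INF y'. SUP x'. ereal (f x' y')) \<le> ereal (f x y)"
      using Sx by (metis INF_lower UNIV_I)
    show "ereal (f x y) \<le> (INF y'. SUP x'. ereal (f x' y'))"
      by (rule INF_greatest) (rule SUP_upper2[where i=x], simp, simp add: S2)
  qed
  show ?thesis unfolding maxmin_value_def minmax_value_def using I Sx M1 M2 by blast
qed

theorem corollaryB3:
  fixes G :: "('w::finite, 'a::finite, 'o, 'q) sgame"
    and r :: "('w,'a) hist \<Rightarrow> 'a \<Rightarrow> 'a pmf \<Rightarrow> real"
  assumes actor_public: "\<forall>h h'. pubhist G h = pubhist G h' \<longrightarrow> actor G h = actor G h'"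
    and init_public: "\<forall>h\<in>set_pmf (mu G). \<forall>h'\<in>set_pmf (mu G). pubhist G h = pubhist G h'"
    and equilibrium: "\<exists>p0 p1. is_saddle (Jobj G r) p0 p1"
    and br0: "\<forall>p1. \<exists>p0. \<forall>p0'. Jobj G r p0' p1 \<le> Jobj G r p0 p1"
    and br1: "\<forall>p0. \<exists>p1. \<forall>p1'. Jobj G r p0 p1 \<le> Jobj G r p0 p1'"
  shows "\<exists>v. maxmin_value (Jobj G r) v \<and> minmax_value (Jobj G r) v
           \<and> maxmin_value (Jpub G r) v \<and> minmax_value (Jpub G r) v"
proof -
  obtain p0 p1 where sad: "is_saddle (Jobj G r) p0 p1" using equilibrium by blast
  define Q0 :: "('w,'a,'o,'q) pubpolicy" where "Q0 = (\<lambda>_. p0)"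
  define Q1 :: "('w,'a,'o,'q) pubpolicy" where "Q1 = (\<lambda>_. p1)"
  have d0: "dpol G Q0 q1 Q0 = p0" for q1 by (simp add: dpol_def Q0_def fun_eq_iff)
  have d1: "dpol G q0 Q1 Q1 = p1" for q0 by (simp add: dpol_def Q1_def fun_eq_iff)
  have T: "Jpub G r q0 q1 = Jobj G r (dpol G q0 q1 q0) (dpol G q0 q1 q1)" for q0 q1
    by (rule transl[OF actor_public init_public])
  have V: "Jpub G r Q0 Q1 = Jobj G r p0 p1" using T[of Q0 Q1] d0 d1 by simp
  have "is_saddle (Jpub G r) Q0 Q1"
    unfolding is_saddle_def
  proof (intro allI conjI)
    fix x' y'
    show "Jpub G r x' Q1 \<le> Jpub G r Q0 Q1"
      using sad unfolding V T[of x' Q1] d1 is_saddle_def by blast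
    show "Jpub G r Q0 Q1 \<le> Jpub G r Q0 y'"
      using sad unfolding V T[of Q0 y'] d0 is_saddle_def by blast
  qed
  then have "maxmin_value (Jpub G r) (Jobj G r p0 p1) \<and> minmax_value (Jpub G r) (Jobj G r p0 p1)"
    using saddle_values V by metis
  moreover have "maxmin_value (Jobj G r) (Jobj G r p0 p1) \<and> minmax_value (Jobj G r) (Jobj G r p0 p1)"
    using saddle_values[OF sad] .
  ultimately show ?thesis by blast
qed

end
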